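(* Let $\mathsf{G}$ be a connected undirected graph on $N=\{1,\dots,n\}$ with edge set $E$ and symmetric positive edge weights $w_{ij}=w_{ji}>0$, let $\mathbf{L}$ be its Laplacian, and consider $\dot{\bm{x}}=-\mathbf{L}\bm{x}$ on $M(\mathsf{a})=\{\bm{x}\in\mathbb{R}^n_{>0}:\frac1n\sum_i x_i=\mathsf{a}\}$ with $\mathsf{a}>0$ (the equilibrium value of each $x_i$). Set $\bm{\rho}=\bm{x}/\mathsf{a}$ and $H_{\mathrm{Gibbs}}(\rho)=\rho(\log\rho-1)$. Then $$V_{\mathrm{Gibbs}}(\bm{x})=\mathsf{a}\sum_{i=1}^n H_{\mathrm{Gibbs}}(\rho_i)=\sum_{i=1}^n x_i\Big(\log\frac{x_i}{\mathsf{a}}-1\Big)$$ is a strict Lyapunov function, and for every $\bm{x}\in M(\mathsf{a})$, $$-\mathbf{L}\bm{x}=-\mathbf{G}^{-1}_{\mathrm{Gibbs}}(\bm{x})\nabla V_{\mathrm{Gibbs}}(\bm{x}),$$ where $\mathbf{G}^{-1}_{\mathrm{Gibbs}}(\bm{x})$ is the Laplacian of $\mathsf{G}$ with state-dependent edge weights $\mathsf{a}\,w_{ij}\,\Lambda(\rho_i,\rho_j)$, $\Lambda(a,b)=\dfrac{a-b}{\log a-\log b}$ for $a\ne b$ and $\Lambda(a,a)=a$ (the logarithmic mean); i.e. $[\mathbf{G}^{-1}_{\mathrm{Gibbs}}(\bm{x})]_{ij}=-\mathsf{a}w_{ij}\Lambda(\rho_i,\rho_j)$ for $\{i,j\}\in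 E$, $0$ for other $i\ne j$, and $[\mathbf{G}^{-1}_{\mathrm{Gibbs}}(\bm{x})]_{ii}=\sum_{j:\{i,j\}\in E}\mathsf{a}w_{ij}\Lambda(\rho_i,\rho_j)$.
   Context: The Laplacian of the weighted undirected graph is $\mathbf{L}=[l_{ij}]$ with $l_{ij}=-w_{ij}$ for $\{i,j\}\in E$, $l_{ij}=0$ for other $i\ne j$, $l_{ii}=\sum_{j:\{i,j\}\in E}w_{ij}$. A strict Lyapunov function is a function $V$ such that along every trajectory whose initial state is not a consensus vector $c\bm{1}$, $V(\bm{x}(t))<V(\bm{x}(0))$ for all $0<t<\infty$. $\nabla$ denotes the Euclidean gradient in $\bm{x}$. *)

theory Defs
  imports "HOL-Analysis.Analysis"
begin

definition weighted_graph :: "('n \<Rightarrow> 'n \<Rightarrow> bool) \<Rightarrow> ('n \<Rightarrow> 'n \<Rightarrow> real) \<Rightarrow> bool" where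
  "weighted_graph E w \<longleftrightarrow>
     (\<forall>i. \<not> E i i) \<and> (\<forall>i j. E i j \<longleftrightarrow> E j i) \<and>
     (\<forall>i j. w i j = w j i) \<and> (\<forall>i j. E i j \<longrightarrow> w i j > 0)"

definition connected_graph :: "('n \<Rightarrow> 'n \<Rightarrow> bool) \<Rightarrow> bool" where
  "connected_graph E \<longleftrightarrow> (\<forall>i j. E\<^sup>*\<^sup>* i j)"

definition laplacian :: "('n::finite \<Rightarrow> 'n \<Rightarrow> bool) \<Rightarrow> ('n \<Rightarrow> 'n \<Rightarrow> real) \<Rightarrow> real^'n^'n" where
  "laplacian E w = (\<chi> i j. if i = j then (\<Sum>k\<in>{k. E i k}. w i k)
                             else if E i j then - w i j else 0)"

definition M_space :: "real \<Rightarrow> (real^'n::finite) set" where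
  "M_space a = {x. (\<forall>i. x $ i > 0) \<and> (\<Sum>i\<in>UNIV. x $ i) / real CARD('n) = a}"

definition consensus :: "real^'n \<Rightarrow> bool" where
  "consensus x \<longleftrightarrow> (\<exists>c. x = (\<chi> i. c))"

definition H_Gibbs :: "real \<Rightarrow> real" where
  "H_Gibbs \<rho> = \<rho> * (ln \<rho> - 1)"

definition V_Gibbs :: "real \<Rightarrow> real^'n::finite \<Rightarrow> real" where
  "V_Gibbs a x = a * (\<Sum>i\<in>UNIV. H_Gibbs (x $ i / a))"

definition log_mean :: "real \<Rightarrow> real \<Rightarrow> real" where
  "log_mean p q = (if p = q then p else (p - q) / (ln p - ln q))"

definition G_inv_Gibbs :: "('n::finite \<Rightarrow> 'n \<Rightarrow> bool) \<Rightarrow> ('n \<Rightarrow> 'n \<Rightarrow> real) \<Rightarrow> real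
    \<Rightarrow> real^'n \<Rightarrow> real^'n^'n" where
  "G_inv_Gibbs E w a x = laplacian E (\<lambda>i j. a * w i j * log_mean (x $ i / a) (x $ j / a))"

definition strict_lyapunov :: "real^'n^'n \<Rightarrow> (real^'n) set \<Rightarrow> (real^'n::finite \<Rightarrow> real) \<Rightarrow> bool" where
  "strict_lyapunov L S V \<longleftrightarrow>
     (\<forall>x :: real \<Rightarrow> real^'n.
        (\<forall>t\<ge>0. (x has_vector_derivative (- (L *v x t))) (at t within {0..})) \<longrightarrow>
        x 0 \<in> S \<longrightarrow> \<not> consensus (x 0) \<longrightarrow>
        (\<forall>t>0. V (x t) < V (x 0)))"

end

theory Submission
  imports Defs
begin

lemma comp_deriv:
  assumes "(x has_vector_derivative v) F"
  shows "((\<lambda>t. x t $ i) has_real_derivative v $ i) F"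
  using bounded_linear.has_vector_derivative[OF bounded_linear_vec_nth assms, of i]
  by (simp add: has_real_derivative_iff_has_vector_derivative)

lemma H_deriv:
  assumes "a > 0" "s > 0"
  shows "((\<lambda>s. a * H_Gibbs (s/a)) has_real_derivative ln (s/a)) (at s)"
unfolding H_Gibbs_def using assms
  by (auto intro!: derivative_eq_intros simp: distrib_left)

lemma V_deriv:
  fixes y :: "real^'n::finite"
  assumes a: "a > 0" and pos: "\<forall>i. y$i > 0"
  shows "(V_Gibbs a has_derivative (\<lambda>h. h \<bullet> (\<chi> i. ln (y$i/a)))) (at y)"
proof -
  have eq: "V_Gibbs a = (\<lambda>x. \<Sum>i\<in>UNIV. a * H_Gibbs (x$i/a))"
    by (auto simp: V_Gibbs_def sum_distrib_left)
  have c: "((\<lambda>x. a * H_Gibbs (x$i/a)) has_derivative (\<lambda>h. ln (y$i/a) * h$i)) (at y)" for i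
    using has_derivative_compose[OF bounded_linear_imp_has_derivative[OF bounded_linear_vec_nth[of i]]
        H_deriv[OF a pos[rule_format, of i], unfolded has_field_derivative_def]]
    by (simp add: o_def)
  have "((\<lambda>x. \<Sum>i\<in>UNIV. a * H_Gibbs (x$i/a)) has_derivative (\<lambda>h. \<Sum>i\<in>UNIV. ln (y$i/a) * h$i)) (at y)"
    by (rule has_derivative_sum) (use c in auto)
  then show ?thesis unfolding eq by (simp add: inner_vec_def mult.commute)
qed


lemma lap_mult:
  fixes E :: "'n::finite \<Rightarrow> 'n \<Rightarrow> bool"
  assumes irr: "\<forall>i. \<not> E i i"
  shows "(laplacian E c *v y) $ i = (\<Sum>j\<in>{j. E i j}. c i j * (y$i - y$j))"
proof -
  have "(laplacian E c *v y) $ i = (\<Sum>j\<in>UNIV. (if j = i then (\<Sum>k\<in>{k. E i k}. c i k) * y$i else 0)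
        + (if E i j then - c i j * y$j else 0))"
    unfolding matrix_vector_mult_def laplacian_def using irr
    by (auto intro!: sum.cong)
  also have "\<dots> = (\<Sum>k\<in>{k. E i k}. c i k) * y$i - (\<Sum>j\<in>{j. E i j}. c i j * y$j)"
    by (simp add: sum.distrib sum.If_cases sum_negf)
  also have "\<dots> = (\<Sum>j\<in>{j. E i j}. c i j * (y$i - y$j))"
    by (simp add: sum_subtractf sum_distrib_right right_diff_distrib)
  finally show ?thesis .
qed

lemma ln_mono_prod:
  fixes a p q :: real
  assumes "a > 0" "p > 0" "q > 0"
  shows "(ln (p/a) - ln (q/a)) * (p - q) \<ge> 0"
    and "(ln (p/a) - ln (q/a)) * (p - q) = 0 \<Longrightarrow> p = q"
proof -
  have pa: "p/a > 0" "q/a > 0" using assms by auto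
  have "p \<le> q \<longleftrightarrow> ln (p/a) \<le> ln (q/a)"
    using ln_le_cancel_iff[OF pa] assms by (simp add: divide_le_cancel)
  moreover have "p < q \<longleftrightarrow> ln (p/a) < ln (q/a)"
    using ln_less_cancel_iff[OF pa] assms by (simp add: divide_less_cancel)
  ultimately show "(ln (p/a) - ln (q/a)) * (p - q) \<ge> 0"
    by (cases "p \<le> q") (auto intro: mult_nonpos_nonpos mult_nonneg_nonneg)
  assume "(ln (p/a) - ln (q/a)) * (p - q) = 0"
  then show "p = q" using assms by auto
qed

definition Sdiss :: "('n::finite \<Rightarrow> 'n \<Rightarrow> bool) \<Rightarrow> ('n \<Rightarrow> 'n \<Rightarrow> real) \<Rightarrow> real \<Rightarrow> real^'n \<Rightarrow> real" where
  "Sdiss E w a y = (\<Sum>i\<in>UNIV. (laplacian E w *v y) $ i * ln (y$i/a))"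

lemma Sdiss:
  fixes E :: "'n::finite \<Rightarrow> 'n \<Rightarrow> bool"
  assumes G: "weighted_graph E w" and C: "connected_graph E" and a: "a > 0"
    and pos: "\<forall>i. y$i > 0"
  shows "Sdiss E w a y \<ge> 0" and "Sdiss E w a y = 0 \<Longrightarrow> consensus y"
proof -
  from G have irr: "\<forall>i. \<not> E i i" and sym: "\<And>i j. E i j \<longleftrightarrow> E j i"
    and wsym: "\<And>i j. w i j = w j i" and wpos: "\<And>i j. E i j \<Longrightarrow> w i j > 0"
    unfolding weighted_graph_def by auto
  define l where "l i = ln (y$i/a)" for i
  define T where "T i j = (if E i j then w i j * l i * (y$i - y$j) else 0)" for i j
  define P where "P i j = (if E i j then w i j * ((l i - l j) * (y$i - y$j)) else 0)" for i j
  have S1: "Sdiss E w a y = (\<Sum>i\<in>UNIV. \<Sum>j\<in>UNIV. T i j)"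
    unfolding Sdiss_def lap_mult[of E, OF irr] T_def l_def
    by (simp add: sum.If_cases sum_distrib_left sum_distrib_right mult_ac)
  have S2: "Sdiss E w a y = (\<Sum>i\<in>UNIV. \<Sum>j\<in>UNIV. T j i)"
    unfolding S1 by (rule sum.swap)
  have "2 * Sdiss E w a y = (\<Sum>i\<in>UNIV. \<Sum>j\<in>UNIV. T i j + T j i)"
    using S1 S2 by (simp add: sum.distrib)
  also have "\<dots> = (\<Sum>i\<in>UNIV. \<Sum>j\<in>UNIV. P i j)"
    unfolding T_def P_def
    by (intro sum.cong refl) (auto simp: sym[of _ i for i] wsym[of _ i for i] algebra_simps)
  finally have twoS: "2 * Sdiss E w a y = (\<Sum>i\<in>UNIV. \<Sum>j\<in>UNIV. P i j)" .
  have Pnn: "P i j \<ge> 0" for i j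
    unfolding P_def l_def using ln_mono_prod(1)[OF a pos[rule_format, of i] pos[rule_format, of j]]
      wpos[of i j] by auto
  have "(\<Sum>i\<in>UNIV. \<Sum>j\<in>UNIV. P i j) \<ge> 0" by (intro sum_nonneg Pnn)
  then show "Sdiss E w a y \<ge> 0" using twoS by simp
  assume "Sdiss E w a y = 0"
  then have "(\<Sum>i\<in>UNIV. \<Sum>j\<in>UNIV. P i j) = 0" using twoS by simp
  then have "\<forall>i. (\<Sum>j\<in>UNIV. P i j) = 0"
    by (subst (asm) sum_nonneg_eq_0_iff) (auto intro: sum_nonneg Pnn)
  then have P0: "P i j = 0" for i j
    by (metis Pnn UNIV_I finite sum_nonneg_eq_0_iff)
  have edge: "E i j \<Longrightarrow> y$i = y$j" for i j
    using P0[of i j] wpos[of i j] ln_mono_prod(2)[OF a pos[rule_format, of i] pos[rule_format, of j]]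
    unfolding P_def l_def by auto
  have "E\<^sup>*\<^sup>* i j \<Longrightarrow> y$i = y$j" for i j
    by (induction rule: rtranclp_induct) (auto dest: edge)
  then have "y$i = y$j" for i j using C unfolding connected_graph_def by auto
  then have "y = (\<chi> i. y $ undefined)" by (simp add: vec_eq_iff)
  then show "consensus y" unfolding consensus_def by blast
qed

lemma grad_eq:
  fixes E :: "'n::finite \<Rightarrow> 'n \<Rightarrow> bool"
  assumes G: "weighted_graph E w" and a: "a > 0" and pos: "\<forall>i. y$i > 0"
  shows "laplacian E w *v y = G_inv_Gibbs E w a y *v (\<chi> i. ln (y$i/a))"
proof -
  from G have irr: "\<forall>i. \<not> E i i" unfolding weighted_graph_def by auto
  have key: "log_mean (p/a) (q/a) * (ln (p/a) - ln (q/a)) = p/a - q/a" if "p > 0" "q > 0" for p q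
  proof (cases "p = q")
    case False
    then have "ln (p/a) \<noteq> ln (q/a)" using that a by simp
    then show ?thesis using False unfolding log_mean_def by (auto simp: divide_simps)
  qed (simp add: log_mean_def)
  show ?thesis
  proof (subst vec_eq_iff, intro allI)
    fix i
    show "(laplacian E w *v y) $ i = (G_inv_Gibbs E w a y *v (\<chi> i. ln (y$i/a))) $ i"
      unfolding G_inv_Gibbs_def lap_mult[of E, OF irr]
      using key[OF pos[rule_format, of i] pos[rule_format]] a
      by (auto intro!: sum.cong simp: mult.assoc[symmetric] diff_divide_distrib[symmetric] ) 
  qed
qed


lemma deriv_at_pos:
  fixes f :: "real \<Rightarrow> real"
  assumes "(f has_real_derivative D) (at r within {0..})" "r > 0"
  shows "(f has_real_derivative D) (at r)"
proof -
  have "(f has_real_derivative D) (at r within {0<..})"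
    by (rule DERIV_subset[OF assms(1)]) auto
  then show ?thesis using at_within_open[of r "{0<..}"] assms(2) by simp
qed

lemma traj_pos:
  fixes x :: "real \<Rightarrow> real^'n::finite" and E :: "'n \<Rightarrow> 'n \<Rightarrow> bool"
  assumes G: "weighted_graph E w"
    and traj: "\<forall>t\<ge>0. (x has_vector_derivative (- (laplacian E w *v x t))) (at t within {0..})"
    and x0: "\<forall>i. x 0 $ i > 0" and t0: "t0 \<ge> 0"
  shows "x t0 $ i > 0"
proof (rule ccontr)
  assume neg: "\<not> x t0 $ i > 0"
  from G have irr: "\<forall>i. \<not> E i i" and wpos: "\<And>i j. E i j \<Longrightarrow> w i j > 0"
    unfolding weighted_graph_def by auto
  have compd: "((\<lambda>t. x t $ k) has_real_derivative (- (laplacian E w *v x t)) $ k) (at t within {0..})"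
    if "t \<ge> 0" for t k
    using comp_deriv[OF traj[rule_format, OF that]] .
  have cont: "continuous_on {0..} (\<lambda>t. x t $ k)" for k
    by (rule DERIV_continuous_on[OF compd]) auto
  have cont': "continuous_on {0..t0} (\<lambda>t. x t $ k)" for k
    by (rule continuous_on_subset[OF cont]) auto
  define K where "K = (\<Union>k\<in>UNIV. {0..t0} \<inter> (\<lambda>t. x t $ k) -` {..0})"
  have clk: "closed ({0..t0} \<inter> (\<lambda>t. x t $ k) -` {..0})" for k
    by (rule continuous_closed_preimage[OF cont']) auto
  have clK: "closed K" unfolding K_def
    by (intro closed_UN finite) (use clk in auto)
  have t0K: "t0 \<in> K" using neg t0 unfolding K_def by (auto simp: not_less)
  have bdd: "bdd_below K" unfolding K_def bdd_below_def by auto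
  define s where "s = Inf K"
  have sK: "s \<in> K" unfolding s_def using closed_contains_Inf[OF _ bdd clK] t0K by auto
  then have s0: "0 \<le> s" "s \<le> t0" unfolding K_def by auto
  have before: "x r $ k > 0" if "0 \<le> r" "r < s" for r k
  proof (rule ccontr)
    assume "\<not> x r $ k > 0"
    then have "r \<in> K" using that s0 unfolding K_def by (auto simp: not_less)
    then have "s \<le> r" unfolding s_def by (rule cInf_lower[OF _ bdd])
    then show False using that by simp
  qed
  from sK obtain j where xj: "x s $ j \<le> 0" unfolding K_def by auto
  have spos: "s > 0" using s0 xj x0[rule_format, of j] by (cases "s = 0") auto
  define D where "D = (\<Sum>k\<in>{k. E j k}. w j k)"
  define u where "u t = exp (D * t) * x t $ j" for t
  have "u 0 \<le> u s"
  proof (rule DERIV_nonneg_imp_increasing_open[of 0 s u])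
    show "0 \<le> s" by fact
  next
    fix r :: real assume r: "0 < r" "r < s"
    have d: "((\<lambda>t. x t $ j) has_real_derivative (- (laplacian E w *v x r)) $ j) (at r)"
      using deriv_at_pos[OF compd[of r j]] r by simp
    have e: "((\<lambda>t. exp (D*t)) has_real_derivative exp (D*r) * D) (at r)"
      by (auto intro!: derivative_eq_intros)
    have du: "(u has_real_derivative exp (D*r) * D * x r $ j + (- (laplacian E w *v x r)) $ j * exp (D*r)) (at r)"
      unfolding u_def using DERIV_mult[OF e d] .
    have "D * x r $ j - (laplacian E w *v x r) $ j = (\<Sum>k\<in>{k. E j k}. w j k * x r $ k)"
      unfolding D_def lap_mult[of E, OF irr]
      by (simp add: sum_distrib_right sum_subtractf right_diff_distrib)
    also have "\<dots> \<ge> 0"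
      using wpos before r by (intro sum_nonneg) (auto intro!: mult_nonneg_nonneg less_imp_le)
    finally have nn: "D * x r $ j - (laplacian E w *v x r) $ j \<ge> 0" .
    have "exp (D*r) * D * x r $ j + (- (laplacian E w *v x r)) $ j * exp (D*r)
        = exp (D*r) * (D * x r $ j - (laplacian E w *v x r) $ j)"
      by (simp add: algebra_simps)
    also have "\<dots> \<ge> 0" using nn by simp
    finally have "exp (D*r) * D * x r $ j + (- (laplacian E w *v x r)) $ j * exp (D*r) \<ge> 0" .
    with du show "\<exists>y. (u has_real_derivative y) (at r) \<and> 0 \<le> y" by blast
  next
    have "continuous_on {0..s} (\<lambda>t. x t $ j)" by (rule continuous_on_subset[OF cont]) auto
    then show "continuous_on {0..s} u" unfolding u_def by (rule continuous_on_mult[rotated]) (intro continuous_intros)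
  qed
  moreover have "u 0 > 0" using x0 unfolding u_def by simp
  moreover have "u s \<le> 0" unfolding u_def using xj by (simp add: mult_nonneg_nonpos)
  ultimately show False by simp
qed

lemma lyap:
  fixes x :: "real \<Rightarrow> real^'n::finite" and E :: "'n \<Rightarrow> 'n \<Rightarrow> bool"
  assumes G: "weighted_graph E w" and C: "connected_graph E" and a: "a > 0"
    and traj: "\<forall>t\<ge>0. (x has_vector_derivative (- (laplacian E w *v x t))) (at t within {0..})"
    and x0: "x 0 \<in> M_space a" and nc: "\<not> consensus (x 0)" and t: "t > 0"
  shows "V_Gibbs a (x t) < V_Gibbs a (x 0)"
proof -
  have x0p: "\<forall>i. x 0 $ i > 0" using x0 unfolding M_space_def by auto
  have pos: "\<forall>i. x s $ i > 0" if "s \<ge> 0" for s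
    using traj_pos[OF G traj x0p that] by blast
  define \<phi> where "\<phi> s = V_Gibbs a (x s)" for s
  have phid: "(\<phi> has_real_derivative - Sdiss E w a (x s)) (at s within {0..})" if "s \<ge> 0" for s
  proof -
    have h1: "(x has_derivative (\<lambda>h. h *\<^sub>R (- (laplacian E w *v x s)))) (at s within {0..})"
      using traj[rule_format, OF that] by (simp add: has_vector_derivative_def)
    have "(\<phi> has_derivative (\<lambda>h. (h *\<^sub>R (- (laplacian E w *v x s))) \<bullet> (\<chi> i. ln (x s $ i/a)))) (at s within {0..})"
      using has_derivative_compose[OF h1 V_deriv[OF a pos[OF that]]] unfolding \<phi>_def o_def .
    moreover have "(\<lambda>h. (h *\<^sub>R (- (laplacian E w *v x s))) \<bullet> (\<chi> i. ln (x s $ i/a))) = (*) (- Sdiss E w a (x s))"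
      by (rule ext) (simp add: Sdiss_def inner_vec_def sum_negf sum_distrib_left mult_ac)
    ultimately show ?thesis by (simp add: has_field_derivative_def)
  qed
  have S0: "Sdiss E w a (x 0) > 0"
    using Sdiss[OF G C a x0p] nc by fastforce
  obtain d where d: "d > 0" "\<And>h. h > 0 \<Longrightarrow> 0 + h \<in> {0..} \<Longrightarrow> h < d \<Longrightarrow> \<phi> 0 > \<phi> (0 + h)"
    using has_real_derivative_neg_dec_right[OF phid[of 0]] S0 by force
  define h where "h = min t d / 2"
  have h: "h > 0" "h < d" "h \<le> t" using d t unfolding h_def by auto
  have "\<phi> h < \<phi> 0" using d(2)[of h] h by simp
  moreover have "\<phi> t \<le> \<phi> h"
  proof (rule DERIV_nonpos_imp_nonincreasing[of h t \<phi>])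
    show "h \<le> t" by fact
    fix r assume r: "h \<le> r" "r \<le> t"
    then have "r > 0" using h by simp
    then have "(\<phi> has_real_derivative - Sdiss E w a (x r)) (at r)"
      using deriv_at_pos[OF phid[of r]] by simp
    moreover have "- Sdiss E w a (x r) \<le> 0" using Sdiss(1)[OF G C a pos] \<open>r > 0\<close> by simp
    ultimately show "\<exists>y. (\<phi> has_real_derivative y) (at r) \<and> y \<le> 0" by blast
  qed
  ultimately show ?thesis unfolding \<phi>_def by simp
qed

theorem corollary1:
  fixes E :: "'n::finite \<Rightarrow> 'n \<Rightarrow> bool" and w :: "'n \<Rightarrow> 'n \<Rightarrow> real" and a :: real
  assumes "weighted_graph E w" and "connected_graph E" and "a > 0"
  shows "strict_lyapunov (laplacian E w) (M_space a) (V_Gibbs a)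
    \<and> (\<forall>x::real^'n\<in>M_space a. V_Gibbs a x = (\<Sum>i\<in>UNIV. x $ i * (ln (x $ i / a) - 1)))
    \<and> (\<forall>x\<in>M_space a. \<exists>g. GDERIV (V_Gibbs a) x :> g
          \<and> - (laplacian E w *v x) = - (G_inv_Gibbs E w a x *v g))"
proof (intro conjI ballI)
  show "strict_lyapunov (laplacian E w) (M_space a) (V_Gibbs a)"
    unfolding strict_lyapunov_def using lyap[OF assms] by blast
next
  fix x :: "real^'n" assume "x \<in> M_space a"
  show "V_Gibbs a x = (\<Sum>i\<in>UNIV. x $ i * (ln (x $ i / a) - 1))"
    unfolding V_Gibbs_def H_Gibbs_def using assms(3) by (simp add: sum_distrib_left)
next
  fix x :: "real^'n" assume "x \<in> M_space a"
  then have pos: "\<forall>i. x $ i > 0" unfolding M_space_def by auto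
  show "\<exists>g. GDERIV (V_Gibbs a) x :> g \<and> - (laplacian E w *v x) = - (G_inv_Gibbs E w a x *v g)"
    using V_deriv[OF assms(3) pos] grad_eq[OF assms(1,3) pos] unfolding gderiv_def by auto
qed

end
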